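(* Let $T\subseteq\mathbb{R}^n$ be an action set. Then $\mathbf{T}(\mathbf{W}(T))=T$, where $\mathbf{W}(T)=\bigcap_{t\in T}\mathbf{W}(t)$ and $\mathbf{T}(W)=\bigcap_{w\in W}\mathbf{T}(w)$.
   Context: Single-commodity network pricing setting: $G=(\mathcal{V},\mathcal{A})$ directed graph, arc costs $c\ge0$, nonempty tolled arc set $\mathcal{A}_1\subsetneq\mathcal{A}$, $n=|\mathcal{A}_1|$, $N$ node–arc incidence matrix, single origin $o$ and destination $d$ connected by a toll-free path, $b_o=1$, $b_d=-1$, $b_i=0$ otherwise, $\mathcal{X}=\{x\in\mathbb{R}^{\mathcal{A}}: Nx=b,\ x\ge0\}$, $x_{\mathcal{A}_1}$ the restriction of $x$ to $\mathcal{A}_1$; tolls $t\in\mathbb{R}^n$ are extended by zeros to $\bar t\in\mathbb{R}^{\mathcal{A}}$. Let $f(t)=\min\{c^\top x+t^\top x_{\mathcal{A}_1}: x\in\mathcal{X}\}$ for $t\ge0$, $f(t)=-\infty$ otherwise. An action set is a set $T=\{t:(t,z)\in F\text{ for some }z\}$ where $F$ is a face of $\operatorname{epi}(-f)$ whose affine hull's direction space does not contain $(0,1)$. For $t\ge0$, $\mathbf{W}(t)$ is the set of $w$ such that $(w,x)$ is optimal for some $x$ in $\min_{w,x}\{c^\top x+t^\top w: x_{\mathcal{A}_1}\le w,\ Nx=b,\ w\ge0,\ x\ge0\}$. For $w\in\mathbb{R}^n$, $w\ge0$, $\mathbf{T}(w)$ is the set of $t$ that are parts of optimal solutions $(t,y)$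 of $\max_{t,y}\{b^\top y-w^\top t: N^\top y-\bar t\le c,\ t\ge0\}$. *)

theory Defs
  imports "HOL-Analysis.Analysis"
begin

text \<open>Tolled arcs are indexed by the finite type 't via an
 injective map e (so A1 = range e and n = CARD('t)).\<close>

definition bvec :: "'v::finite \<Rightarrow> 'v \<Rightarrow> real^'v" where
  "bvec orig dest = (\<chi> i. if i = orig then 1 else if i = dest then -1 else 0)"

definition incid :: "('a::finite \<Rightarrow> 'v::finite) \<Rightarrow> ('a \<Rightarrow> 'v) \<Rightarrow> real^'a \<Rightarrow> real^'v" where
  "incid src tgt x = (\<chi> i. (\<Sum>a\<in>{a. src a = i}. x$a) - (\<Sum>a\<in>{a. tgt a = i}. x$a))"

definition restr :: "('t::finite \<Rightarrow> 'a::finite) \<Rightarrow> real^'a \<Rightarrow> real^'t" where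
  "restr e x = (\<chi> i. x $ e i)"

definition tbar :: "('t::finite \<Rightarrow> 'a::finite) \<Rightarrow> real^'t \<Rightarrow> real^'a" where
  "tbar e t = (\<chi> a. if a \<in> range e then t $ (inv e a) else 0)"

definition nonneg :: "real^'n \<Rightarrow> bool" where
  "nonneg v \<longleftrightarrow> (\<forall>i. 0 \<le> v $ i)"

definition Xset :: "('a::finite \<Rightarrow> 'v::finite) \<Rightarrow> ('a \<Rightarrow> 'v) \<Rightarrow> 'v \<Rightarrow> 'v \<Rightarrow> (real^'a) set" where
  "Xset src tgt orig dest = {x. incid src tgt x = bvec orig dest \<and> nonneg x}"

text \<open>f(t) for t >= 0 (the minimum, written as an infimum); f(t) = -infinity otherwise,
 which is encoded in the definition of the epigraph of -f below.\<close>
definition fval :: "('a::finite \<Rightarrow> 'v::finite) \<Rightarrow> ('a \<Rightarrow> 'v) \<Rightarrow> real^'a \<Rightarrow> ('t::finite \<Rightarrow> 'a) \<Rightarrow> 'v \<Rightarrow> 'v \<Rightarrow> real^'t \<Rightarrow> real" where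
  "fval src tgt c e orig dest t =
     Inf {c \<bullet> x + t \<bullet> restr e x | x. x \<in> Xset src tgt orig dest}"

text \<open>epi(-f) = {(t,z). -f(t) <= z}; since -f(t) = +infinity unless t >= 0.\<close>
definition epi_negf :: "('a::finite \<Rightarrow> 'v::finite) \<Rightarrow> ('a \<Rightarrow> 'v) \<Rightarrow> real^'a \<Rightarrow> ('t::finite \<Rightarrow> 'a) \<Rightarrow> 'v \<Rightarrow> 'v \<Rightarrow> ((real^'t) \<times> real) set" where
  "epi_negf src tgt c e orig dest =
     {(t, z). nonneg t \<and> - fval src tgt c e orig dest t \<le> z}"

definition action_set :: "('a::finite \<Rightarrow> 'v::finite) \<Rightarrow> ('a \<Rightarrow> 'v) \<Rightarrow> real^'a \<Rightarrow> ('t::finite \<Rightarrow> 'a) \<Rightarrow> 'v \<Rightarrow> 'v \<Rightarrow> (real^'t) set \<Rightarrow> bool" where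
  "action_set src tgt c e orig dest T \<longleftrightarrow>
     (\<exists>F. F face_of epi_negf src tgt c e orig dest \<and> F \<noteq> {} \<and>
          ((0::real^'t), (1::real)) \<notin> {u - v | u v. u \<in> affine hull F \<and> v \<in> affine hull F} \<and>
          T = {t. \<exists>z. (t, z) \<in> F})"

definition lpW_feas :: "('a::finite \<Rightarrow> 'v::finite) \<Rightarrow> ('a \<Rightarrow> 'v) \<Rightarrow> ('t::finite \<Rightarrow> 'a) \<Rightarrow> 'v \<Rightarrow> 'v \<Rightarrow> real^'t \<Rightarrow> real^'a \<Rightarrow> bool" where
  "lpW_feas src tgt e orig dest w x \<longleftrightarrow>
     (\<forall>i. x $ e i \<le> w $ i) \<and> incid src tgt x = bvec orig dest \<and> nonneg w \<and> nonneg x"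

definition Wt :: "('a::finite \<Rightarrow> 'v::finite) \<Rightarrow> ('a \<Rightarrow> 'v) \<Rightarrow> real^'a \<Rightarrow> ('t::finite \<Rightarrow> 'a) \<Rightarrow> 'v \<Rightarrow> 'v \<Rightarrow> real^'t \<Rightarrow> (real^'t) set" where
  "Wt src tgt c e orig dest t =
     {w. \<exists>x. lpW_feas src tgt e orig dest w x \<and>
           (\<forall>w' x'. lpW_feas src tgt e orig dest w' x' \<longrightarrow> c \<bullet> x + t \<bullet> w \<le> c \<bullet> x' + t \<bullet> w')}"

text \<open>Dual LP  max b y - w t  s.t. N^T y - tbar <= c, t >= 0;  (N^T y)_a = y_tail - y_head.\<close>
definition lpT_feas :: "('a::finite \<Rightarrow> 'v::finite) \<Rightarrow> ('a \<Rightarrow> 'v) \<Rightarrow> real^'a \<Rightarrow> ('t::finite \<Rightarrow> 'a) \<Rightarrow> real^'t \<Rightarrow> real^'v \<Rightarrow> bool" where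
  "lpT_feas src tgt c e t y \<longleftrightarrow>
     (\<forall>a. y $ src a - y $ tgt a - tbar e t $ a \<le> c $ a) \<and> nonneg t"

definition Tw :: "('a::finite \<Rightarrow> 'v::finite) \<Rightarrow> ('a \<Rightarrow> 'v) \<Rightarrow> real^'a \<Rightarrow> ('t::finite \<Rightarrow> 'a) \<Rightarrow> 'v \<Rightarrow> 'v \<Rightarrow> real^'t \<Rightarrow> (real^'t) set" where
  "Tw src tgt c e orig dest w =
     {t. \<exists>y. lpT_feas src tgt c e t y \<and>
           (\<forall>t' y'. lpT_feas src tgt c e t' y' \<longrightarrow>
               bvec orig dest \<bullet> y' - w \<bullet> t' \<le> bvec orig dest \<bullet> y - w \<bullet> t)}"

definition walk_in :: "('a \<Rightarrow> 'v) \<Rightarrow> ('a \<Rightarrow> 'v) \<Rightarrow> 'a set \<Rightarrow> 'v \<Rightarrow> 'v \<Rightarrow> bool" where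
  "walk_in src tgt S u v \<longleftrightarrow>
     (\<exists>as. as \<noteq> [] \<and> src (hd as) = u \<and> tgt (last as) = v \<and> set as \<subseteq> S \<and>
        (\<forall>k. Suc k < length as \<longrightarrow> tgt (as ! k) = src (as ! Suc k)))"

end

theory Submission
  imports Defs
begin



fun wk :: "('a \<Rightarrow> 'v) \<Rightarrow> ('a \<Rightarrow> 'v) \<Rightarrow> 'a list \<Rightarrow> 'v \<Rightarrow> 'v \<Rightarrow> bool" where
  "wk s g [] u v = (u = v)"
| "wk s g (a # as) u v = (s a = u \<and> wk s g as (g a) v)"

definition wc :: "real^'a \<Rightarrow> 'a list \<Rightarrow> real" where
  "wc c' W = sum_list (map (\<lambda>a. c' $ a) W)"

definition uv :: "'a \<Rightarrow> real^'a" where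
  "uv a = (\<chi> b. if b = a then 1 else 0)"

fun vecof :: "'a list \<Rightarrow> real^'a" where
  "vecof [] = 0"
| "vecof (a # as) = uv a + vecof as"

lemma wk_append: "wk s g (xs @ ys) u v \<longleftrightarrow> (\<exists>m. wk s g xs u m \<and> wk s g ys m v)"
  by (induction xs arbitrary: u) auto

lemma wc_append: "wc c' (xs @ ys) = wc c' xs + wc c' ys"
  by (simp add: wc_def)

lemma wc_cons: "wc c' (a # xs) = c' $ a + wc c' xs"
  by (simp add: wc_def)

lemma wc_nonneg: "\<forall>a. 0 \<le> c' $ a \<Longrightarrow> 0 \<le> wc c' W"
  unfolding wc_def by (induction W) (auto intro: add_nonneg_nonneg)

lemma wk_take_drop:
  "wk s g W u v \<Longrightarrow> i < length W \<Longrightarrow> wk s g (take i W) u (s (W ! i)) \<and> wk s g (drop i W) (s (W ! i)) v"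
proof (induction W arbitrary: u i)
  case Nil then show ?case by simp
next
  case (Cons a as)
  show ?case
  proof (cases i)
    case 0 then show ?thesis using Cons by simp
  next
    case (Suc k)
    then show ?thesis using Cons.IH[of "g a" k] Cons.prems by auto
  qed
qed

lemma wk_shorten:
  fixes W :: "'a::finite list" and s g :: "'a \<Rightarrow> 'v::finite"
  assumes "wk s g W u v" "\<forall>a. 0 \<le> c' $ a"
  shows "\<exists>W'. wk s g W' u v \<and> length W' \<le> CARD('v) \<and> wc c' W' \<le> wc c' W"
  using assms(1)
proof (induction "length W" arbitrary: W rule: less_induct)
  case less
  show ?case
  proof (cases "length W \<le> CARD('v)")
    case True then show ?thesis using less.prems by blast
  next
    case False
    have "card (set (map s W)) \<le> CARD('v)" by (rule card_mono) auto
    with False have "\<not> distinct (map s W)"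
      using distinct_card by fastforce
    then obtain i j where ij: "i < length W" "j < length W" "i \<noteq> j" "s (W ! i) = s (W ! j)"
      by (auto simp: distinct_conv_nth)
    then obtain i j where ij: "i < j" "j < length W" "s (W ! i) = s (W ! j)"
      by (metis linorder_neqE_nat order.strict_trans)
    have w1: "wk s g (take i W) u (s (W ! i))"
      using wk_take_drop[OF less.prems, of i] ij by auto
    have w2: "wk s g (drop j W) (s (W ! j)) v"
      using wk_take_drop[OF less.prems, of j] ij by auto
    define W1 where "W1 = take i W @ drop j W"
    have wW1: "wk s g W1 u v" unfolding W1_def wk_append using w1 w2 ij by auto
    have lW1: "length W1 < length W" unfolding W1_def using ij by auto
    have "wc c' W = wc c' (take i W) + wc c' (drop i W)"
      by (metis append_take_drop_id wc_append)
    also have "wc c' (drop i W) = wc c' (take (j - i) (drop i W)) + wc c' (drop (j - i) (drop i W))"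
      by (metis append_take_drop_id wc_append)
    also have "drop (j - i) (drop i W) = drop j W" using ij by simp
    finally have "wc c' W1 \<le> wc c' W"
      unfolding W1_def wc_append using wc_nonneg[OF assms(2), of "take (j - i) (drop i W)"] by linarith
    then show ?thesis using less.hyps[OF lW1 wW1] by force
  qed
qed

lemma incid_add: "incid s g (x + y) = incid s g x + incid s g y"
  by (simp add: incid_def vec_eq_iff sum.distrib)

lemma incid_zero: "incid s g 0 = 0"
  by (simp add: incid_def vec_eq_iff)

lemma incid_uv: "incid s g (uv a) = uv (s a) - uv (g a)"
  by (simp add: incid_def vec_eq_iff uv_def)

lemma incid_vecof: "wk s g W u v \<Longrightarrow> incid s g (vecof W) = uv u - uv v"
  by (induction W arbitrary: u) (auto simp: incid_add incid_zero incid_uv)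

lemma bvec_uv: "orig \<noteq> dest \<Longrightarrow> bvec orig dest = uv orig - uv dest"
  by (auto simp: bvec_def uv_def vec_eq_iff)

lemma inner_uv: "c' \<bullet> uv a = c' $ a"
  by (simp add: inner_vec_def uv_def if_distrib cong: if_cong)

lemma inner_vecof: "c' \<bullet> vecof W = wc c' W"
  by (induction W) (auto simp: wc_cons inner_add_right inner_uv, simp add: wc_def)

lemma nonneg_vecof: "nonneg (vecof W)"
  by (induction W) (auto simp: nonneg_def uv_def)

lemma incid_inner: "incid s g x \<bullet> y = (\<Sum>a\<in>UNIV. x $ a * (y $ s a - y $ g a))"
proof -
  have "incid s g x \<bullet> y = (\<Sum>i\<in>UNIV. (\<Sum>a\<in>{a. s a = i}. x $ a * y $ s a)) - (\<Sum>i\<in>UNIV. (\<Sum>a\<in>{a. g a = i}. x $ a * y $ g a))"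
    by (simp add: inner_vec_def incid_def left_diff_distrib sum_distrib_right sum_subtractf)
  also have "(\<Sum>i\<in>UNIV. (\<Sum>a\<in>{a. s a = i}. x $ a * y $ s a)) = (\<Sum>a\<in>UNIV. x $ a * y $ s a)"
    using sum.group[of UNIV UNIV s "\<lambda>a. x $ a * y $ s a"] by simp
  also have "(\<Sum>i\<in>UNIV. (\<Sum>a\<in>{a. g a = i}. x $ a * y $ g a)) = (\<Sum>a\<in>UNIV. x $ a * y $ g a)"
    using sum.group[of UNIV UNIV g "\<lambda>a. x $ a * y $ g a"] by simp
  finally show ?thesis by (simp add: right_diff_distrib sum_subtractf)
qed

lemma tbar_inner: "inj e \<Longrightarrow> tbar e t \<bullet> x = t \<bullet> restr e x"
proof -
  assume inj: "inj e"
  have "tbar e t \<bullet> x = (\<Sum>a\<in>UNIV. if a \<in> range e then t $ inv e a * x $ a else 0)"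
    by (auto simp: inner_vec_def tbar_def intro!: sum.cong)
  also have "\<dots> = (\<Sum>a\<in>range e. t $ inv e a * x $ a)"
    by (simp add: sum.If_cases Int_absorb1)
  also have "\<dots> = (\<Sum>i\<in>UNIV. t $ i * x $ e i)"
    using inj by (simp add: sum.reindex)
  finally show ?thesis by (simp add: inner_vec_def restr_def)
qed

lemma wk_of_walk_in:
  "as \<noteq> [] \<Longrightarrow> (\<forall>k. Suc k < length as \<longrightarrow> g (as ! k) = s (as ! Suc k)) \<Longrightarrow> wk s g as (s (hd as)) (g (last as))"
proof (induction as)
  case Nil then show ?case by simp
next
  case (Cons a as)
  show ?case
  proof (cases "as = []")
    case True then show ?thesis by simp
  next
    case False
    have h: "\<forall>k. Suc k < length as \<longrightarrow> g (as ! k) = s (as ! Suc k)"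
      using Cons.prems(2) by (metis Suc_less_eq length_Cons nth_Cons_Suc)
    have "Suc 0 < length (a # as)" using False by simp
    then have "g ((a # as) ! 0) = s ((a # as) ! Suc 0)" using Cons.prems(2) by blast
    then have "g a = s (hd as)" using False by (simp add: hd_conv_nth)
    then show ?thesis using Cons.IH[OF False h] False by simp
  qed
qed




locale net =
  fixes src tgt :: "'a::finite \<Rightarrow> 'v::finite" and c :: "real^'a" and e :: "'t::finite \<Rightarrow> 'a"
    and orig dest :: 'v
  assumes inj: "inj e" and cpos: "\<forall>a. 0 \<le> c $ a" and od: "orig \<noteq> dest"
    and W0: "\<exists>W. wk src tgt W orig dest"
begin

definition cc :: "real^'t \<Rightarrow> real^'a" where "cc t = c + tbar e t"

definition P :: "(real^'a) set" where
  "P = vecof ` {W. wk src tgt W orig dest \<and> length W \<le> CARD('v)}"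

lemma cc_inner: "cc t \<bullet> x = c \<bullet> x + t \<bullet> restr e x"
  by (simp add: cc_def inner_add_left tbar_inner[OF inj])

lemma cc_nonneg: "nonneg t \<Longrightarrow> 0 \<le> cc t $ a"
  using cpos by (auto simp: cc_def tbar_def nonneg_def intro: add_nonneg_nonneg)

lemma P_sub: "p \<in> P \<Longrightarrow> p \<in> Xset src tgt orig dest"
  using od by (auto simp: P_def Xset_def incid_vecof bvec_uv nonneg_vecof)

lemma finite_walks: "finite {W :: 'a list. length W \<le> n}"
  using finite_lists_length_le[of "UNIV :: 'a set" n] by simp

lemma finite_P: "finite P"
  unfolding P_def by (rule finite_imageI, rule finite_subset[OF _ finite_walks]) auto

lemma WD:
  assumes "lpT_feas src tgt c e t y" "x \<in> Xset src tgt orig dest"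
  shows "bvec orig dest \<bullet> y \<le> cc t \<bullet> x"
proof -
  have "bvec orig dest \<bullet> y = (\<Sum>a\<in>UNIV. x $ a * (y $ src a - y $ tgt a))"
    using assms(2) incid_inner[of src tgt x y] by (simp add: Xset_def)
  also have "\<dots> \<le> (\<Sum>a\<in>UNIV. x $ a * cc t $ a)"
  proof (rule sum_mono)
    fix a
    have "y $ src a - y $ tgt a - tbar e t $ a \<le> c $ a"
      using assms(1) by (simp add: lpT_feas_def)
    then have "y $ src a - y $ tgt a \<le> cc t $ a" by (simp add: cc_def)
    moreover have "0 \<le> x $ a" using assms(2) by (auto simp: Xset_def nonneg_def)
    ultimately show "x $ a * (y $ src a - y $ tgt a) \<le> x $ a * cc t $ a"
      by (simp add: mult_left_mono)
  qed
  also have "\<dots> = cc t \<bullet> x" by (simp add: inner_vec_def mult.commute)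
  finally show ?thesis .
qed

lemma potential:
  assumes t: "nonneg t"
  shows "\<exists>y W. lpT_feas src tgt c e t y \<and> wk src tgt W orig dest \<and> length W \<le> CARD('v)
           \<and> bvec orig dest \<bullet> y = wc (cc t) W"
proof -
  let ?c = "cc t"
  have cp: "\<forall>a. 0 \<le> ?c $ a" using cc_nonneg[OF t] by blast
  define Ws where "Ws u = {W. wk src tgt W u dest \<and> length W \<le> CARD('v)}" for u
  define M where "M = Max (wc ?c ` {W. length W \<le> CARD('v)})"
  have finWs: "finite (Ws u)" for u
    unfolding Ws_def by (rule finite_subset[OF _ finite_walks]) auto
  have M_ge: "W \<in> Ws u \<Longrightarrow> wc ?c W \<le> M" for W u
    unfolding M_def Ws_def by (rule Max_ge) (auto intro: finite_imageI finite_walks)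
  have M_nn: "0 \<le> M"
    using M_ge[of "[]" dest] by (simp add: Ws_def wc_def)
  define y :: "real^'v" where "y = (\<chi> u. Min (insert M (wc ?c ` Ws u)))"
  have fin: "finite (insert M (wc ?c ` Ws u))" for u using finWs by simp
  have y_le: "W \<in> Ws u \<Longrightarrow> y $ u \<le> wc ?c W" for W u
    unfolding y_def by (simp add: Min_le[OF fin])
  have y_leM: "y $ u \<le> M" for u
    unfolding y_def by (simp add: Min_le[OF fin])
  have y_in: "y $ u \<in> insert M (wc ?c ` Ws u)" for u
    unfolding y_def using Min_in[OF fin] by simp
  have yd: "y $ dest = 0"
  proof -
    have "[] \<in> Ws dest" by (simp add: Ws_def)
    then have "y $ dest \<le> 0" using y_le[of "[]" dest] by (simp add: wc_def)
    moreover have "0 \<le> y $ dest" using y_in[of dest] M_nn wc_nonneg[OF cp] by auto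
    ultimately show ?thesis by simp
  qed
  have feas: "lpT_feas src tgt c e t y"
    unfolding lpT_feas_def
  proof (intro conjI allI t)
    fix a
    have "y $ src a \<le> ?c $ a + y $ tgt a"
    proof (cases "y $ tgt a = M")
      case True then show ?thesis using y_leM[of "src a"] cp by (metis add_increasing)
    next
      case False
      then obtain W where W: "W \<in> Ws (tgt a)" "y $ tgt a = wc ?c W" using y_in[of "tgt a"] by auto
      have "wk src tgt (a # W) (src a) dest" using W by (simp add: Ws_def)
      then obtain W' where W': "wk src tgt W' (src a) dest" "length W' \<le> CARD('v)" "wc ?c W' \<le> wc ?c (a # W)"
        using wk_shorten[OF _ cp] by blast
      then have "y $ src a \<le> wc ?c W'" using y_le[of W' "src a"] by (simp add: Ws_def)
      then show ?thesis using W W' by (simp add: wc_cons)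
    qed
    then show "y $ src a - y $ tgt a - tbar e t $ a \<le> c $ a" by (simp add: cc_def)
  qed
  have b: "bvec orig dest \<bullet> y = y $ orig"
    using od yd by (simp add: bvec_uv[OF od] inner_diff_left inner_commute[of "uv _"] inner_uv)
  obtain W1 where "wk src tgt W1 orig dest" using W0 by blast
  then obtain W2 where W2: "W2 \<in> Ws orig" using wk_shorten[OF _ cp] by (fastforce simp: Ws_def)
  have "\<exists>W\<in>Ws orig. y $ orig = wc ?c W"
  proof (cases "y $ orig = M")
    case True
    then have "wc ?c W2 = y $ orig" using y_le[OF W2] M_ge[OF W2] by simp
    then show ?thesis using W2 by metis
  next
    case False then show ?thesis using y_in[of orig] by auto
  qed
  then obtain W where W: "W \<in> Ws orig" "y $ orig = wc ?c W" by blast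
  show ?thesis
    by (rule exI[of _ y], rule exI[of _ W]) (use feas b W in \<open>simp add: Ws_def\<close>)
qed

lemma fval_set: "{c \<bullet> x + t \<bullet> restr e x | x. x \<in> Xset src tgt orig dest} = (\<lambda>x. cc t \<bullet> x) ` Xset src tgt orig dest"
  by (auto simp: cc_inner)

lemma fval_min:
  assumes t: "nonneg t"
  shows "\<exists>p\<in>P. fval src tgt c e orig dest t = cc t \<bullet> p \<and> (\<forall>x\<in>Xset src tgt orig dest. cc t \<bullet> p \<le> cc t \<bullet> x)
          \<and> (\<exists>y. lpT_feas src tgt c e t y \<and> bvec orig dest \<bullet> y = fval src tgt c e orig dest t)"
proof -
  obtain y W where yW: "lpT_feas src tgt c e t y" "wk src tgt W orig dest" "length W \<le> CARD('v)"
      "bvec orig dest \<bullet> y = wc (cc t) W"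
    using potential[OF t] by blast
  define p where "p = vecof W"
  have pP: "p \<in> P" using yW unfolding P_def p_def by blast
  have low: "\<forall>x\<in>Xset src tgt orig dest. cc t \<bullet> p \<le> cc t \<bullet> x"
    using WD[OF yW(1)] yW(4) by (simp add: p_def inner_vecof)
  have fe: "fval src tgt c e orig dest t = cc t \<bullet> p"
    unfolding fval_def fval_set
    by (rule cInf_eq_minimum) (use P_sub[OF pP] low in auto)
  have "bvec orig dest \<bullet> y = fval src tgt c e orig dest t"
    using fe yW(4) by (simp add: p_def inner_vecof)
  then show ?thesis using pP low yW(1) fe by blast
qed

lemma f_le: "nonneg t \<Longrightarrow> x \<in> Xset src tgt orig dest \<Longrightarrow> fval src tgt c e orig dest t \<le> cc t \<bullet> x"
  using fval_min by fastforce

end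




lemma eps_exists:
  fixes \<alpha> \<beta> :: "'k \<Rightarrow> real"
  assumes "finite K" "\<forall>k\<in>K. 0 < \<beta> k"
  shows "\<exists>\<epsilon>>0. \<forall>\<delta>. 0 < \<delta> \<and> \<delta> \<le> \<epsilon> \<longrightarrow> (\<forall>k\<in>K. \<delta> * \<alpha> k \<le> \<beta> k)"
proof -
  define \<epsilon> where "\<epsilon> = Min (insert 1 ((\<lambda>k. \<beta> k / (\<bar>\<alpha> k\<bar> + 1)) ` K))"
  have fin: "finite (insert 1 ((\<lambda>k. \<beta> k / (\<bar>\<alpha> k\<bar> + 1)) ` K))" using assms(1) by simp
  have pos: "0 < \<epsilon>" unfolding \<epsilon>_def using assms(2)
    by (subst Min_gr_iff[OF fin]) auto
  have le: "\<epsilon> \<le> \<beta> k / (\<bar>\<alpha> k\<bar> + 1)" if "k \<in> K" for k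
    unfolding \<epsilon>_def using that by (intro Min_le[OF fin]) auto
  show ?thesis
  proof (intro exI[of _ \<epsilon>] conjI pos allI impI ballI)
    fix \<delta> k assume d: "0 < \<delta> \<and> \<delta> \<le> \<epsilon>" and k: "k \<in> K"
    have "\<delta> * \<alpha> k \<le> \<delta> * (\<bar>\<alpha> k\<bar> + 1)" using d by (intro mult_left_mono) auto
    also have "\<dots> \<le> \<epsilon> * (\<bar>\<alpha> k\<bar> + 1)" using d by (intro mult_right_mono) auto
    also have "\<dots> \<le> \<beta> k" using le[OF k] by (simp add: le_divide_eq add_pos_nonneg)
    finally show "\<delta> * \<alpha> k \<le> \<beta> k" .
  qed
qed

lemma inner_mono_nonneg:
  fixes t a b :: "real^'n"
  shows "nonneg t \<Longrightarrow> (\<forall>i. a $ i \<le> b $ i) \<Longrightarrow> t \<bullet> a \<le> t \<bullet> b"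
  unfolding inner_vec_def nonneg_def by (auto intro!: sum_mono mult_left_mono)

context net
begin

lemma nonneg_restr: "nonneg x \<Longrightarrow> nonneg (restr e x)"
  by (simp add: nonneg_def restr_def)

lemma X_ne: "Xset src tgt orig dest \<noteq> {}"
proof -
  have "nonneg (0::real^'t)" by (simp add: nonneg_def)
  then show ?thesis using fval_min[of 0] P_sub by blast
qed

lemma T_sub_TW:
  assumes t: "nonneg t" and w: "w \<in> Wt src tgt c e orig dest t"
  shows "t \<in> Tw src tgt c e orig dest w"
proof -
  obtain x where x: "lpW_feas src tgt e orig dest w x"
    and opt: "\<forall>w' x'. lpW_feas src tgt e orig dest w' x' \<longrightarrow> c \<bullet> x + t \<bullet> w \<le> c \<bullet> x' + t \<bullet> w'"
    using w by (auto simp: Wt_def)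
  obtain y where y: "lpT_feas src tgt c e t y" "bvec orig dest \<bullet> y = fval src tgt c e orig dest t"
    using fval_min[OF t] by blast
  have xX: "x \<in> Xset src tgt orig dest" using x by (simp add: lpW_feas_def Xset_def)
  have "c \<bullet> x + t \<bullet> w \<le> fval src tgt c e orig dest t"
    unfolding fval_def fval_set
  proof (rule cInf_greatest)
    show "(\<lambda>x. cc t \<bullet> x) ` Xset src tgt orig dest \<noteq> {}" using X_ne by simp
  next
    fix v assume "v \<in> (\<lambda>x. cc t \<bullet> x) ` Xset src tgt orig dest"
    then obtain x' where x': "x' \<in> Xset src tgt orig dest" "v = cc t \<bullet> x'" by auto
    have "lpW_feas src tgt e orig dest (restr e x') x'"
      using x' by (auto simp: lpW_feas_def Xset_def restr_def nonneg_def)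
    then show "c \<bullet> x + t \<bullet> w \<le> v" using opt x' by (simp add: cc_inner)
  qed
  moreover have "bvec orig dest \<bullet> y' - w \<bullet> t' \<le> c \<bullet> x" if "lpT_feas src tgt c e t' y'" for t' y'
  proof -
    have "bvec orig dest \<bullet> y' \<le> cc t' \<bullet> x" by (rule WD[OF that xX])
    also have "\<dots> = c \<bullet> x + t' \<bullet> restr e x" by (rule cc_inner)
    also have "t' \<bullet> restr e x \<le> t' \<bullet> w"
      using that x by (intro inner_mono_nonneg) (auto simp: lpT_feas_def lpW_feas_def restr_def)
    finally show ?thesis by (simp add: inner_commute)
  qed
  ultimately have "\<forall>t' y'. lpT_feas src tgt c e t' y' \<longrightarrow>
      bvec orig dest \<bullet> y' - w \<bullet> t' \<le> bvec orig dest \<bullet> y - w \<bullet> t"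
    using y by (smt (verit) inner_commute)
  then show ?thesis
    using y unfolding Tw_def by blast
qed

lemma Wmem:
  assumes p: "p \<in> P" and t: "nonneg t" and f: "fval src tgt c e orig dest t = cc t \<bullet> p"
    and wge: "\<forall>i. restr e p $ i \<le> w $ i" and tw: "t \<bullet> w = t \<bullet> restr e p"
  shows "w \<in> Wt src tgt c e orig dest t"
proof -
  have pX: "p \<in> Xset src tgt orig dest" by (rule P_sub[OF p])
  have "lpW_feas src tgt e orig dest w p"
    using pX wge by (auto simp: lpW_feas_def Xset_def nonneg_def restr_def intro: order_trans)
  moreover have "c \<bullet> p + t \<bullet> w \<le> c \<bullet> x' + t \<bullet> w'" if "lpW_feas src tgt e orig dest w' x'" for w' x'
  proof -
    have x'X: "x' \<in> Xset src tgt orig dest" using that by (simp add: lpW_feas_def Xset_def)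
    have "c \<bullet> p + t \<bullet> w = fval src tgt c e orig dest t" using f tw by (simp add: cc_inner)
    also have "\<dots> \<le> cc t \<bullet> x'" by (rule f_le[OF t x'X])
    also have "\<dots> = c \<bullet> x' + t \<bullet> restr e x'" by (rule cc_inner)
    also have "t \<bullet> restr e x' \<le> t \<bullet> w'"
      using that t by (intro inner_mono_nonneg) (auto simp: lpW_feas_def restr_def)
    finally show ?thesis by simp
  qed
  ultimately show ?thesis by (auto simp: Wt_def)
qed

lemma cc_comb: "a + b = 1 \<Longrightarrow> cc (a *\<^sub>R s + b *\<^sub>R t) \<bullet> p = a * (cc s \<bullet> p) + b * (cc t \<bullet> p)"
  by (simp add: cc_inner inner_add_left algebra_simps) (metis add.commute add_diff_cancel_left' mult.commute mult_1 distrib_left)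

end




context net
begin

lemma face_graph:
  assumes F: "F face_of epi_negf src tgt c e orig dest"
    and nv: "((0::real^'t), (1::real)) \<notin> {u - v | u v. u \<in> affine hull F \<and> v \<in> affine hull F}"
    and tz: "(t, z) \<in> F"
  shows "nonneg t \<and> z = - fval src tgt c e orig dest t"
proof -
  let ?f = "fval src tgt c e orig dest t"
  have "(t, z) \<in> epi_negf src tgt c e orig dest" using face_of_imp_subset[OF F] tz by blast
  then have t: "nonneg t" and le: "- ?f \<le> z" by (auto simp: epi_negf_def)
  have "z = - ?f"
  proof (rule ccontr)
    assume "z \<noteq> - ?f"
    then have d: "0 < z + ?f" using le by simp
    define A where "A = (t, - ?f)"
    define B where "B = (t, z + (z + ?f))"
    have AE: "A \<in> epi_negf src tgt c e orig dest" using t by (simp add: A_def epi_negf_def)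
    have BE: "B \<in> epi_negf src tgt c e orig dest" using t d by (simp add: B_def epi_negf_def)
    have AB: "A \<noteq> B" using d by (simp add: A_def B_def)
    have "(1 - 1/2) *\<^sub>R A + (1/2) *\<^sub>R B = (t, z)"
      by (simp add: A_def B_def scaleR_left_distrib[symmetric]) (simp add: field_simps)
    then have "(t, z) \<in> open_segment A B"
      unfolding in_segment using AB by (intro conjI exI[of _ "1/2"]) auto
    then have AF: "A \<in> F" and BF: "B \<in> F" using F AE BE tz unfolding face_of_def by blast+
    define s where "s = 1 / (2 * (z + ?f))"
    have "(1 - s) *\<^sub>R A + s *\<^sub>R B \<in> affine hull F"
      using AF BF by (intro mem_affine[OF affine_affine_hull]) (auto intro: hull_inc)
    moreover have "A \<in> affine hull F" using AF by (auto intro: hull_inc)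
    moreover have "(1 - s) *\<^sub>R A + s *\<^sub>R B - A = (0, s * (2 * (z + ?f)))"
      by (simp add: A_def B_def scaleR_left_distrib[symmetric] algebra_simps)
    moreover have "s * (2 * (z + ?f)) = 1" using d by (simp add: s_def)
    ultimately have "(0, 1) \<in> {u - v |u v. u \<in> affine hull F \<and> v \<in> affine hull F}" by (metis (mono_tags, lifting) mem_Collect_eq)
    then show False using nv by blast
  qed
  then show ?thesis using t by simp
qed

end




context net
begin

lemma main:
  assumes F: "F face_of epi_negf src tgt c e orig dest" and Fne: "F \<noteq> {}"
    and nv: "((0::real^'t), (1::real)) \<notin> {u - v | u v. u \<in> affine hull F \<and> v \<in> affine hull F}"
    and TF: "T = {t. \<exists>z. (t, z) \<in> F}"
  shows "(\<Inter>w\<in>(\<Inter>t\<in>T. Wt src tgt c e orig dest t). Tw src tgt c e orig dest w) = T"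
proof -
  let ?f = "fval src tgt c e orig dest"
  note G = face_graph[OF F nv]
  have TF': "t \<in> T \<longleftrightarrow> (t, - ?f t) \<in> F" for t
    using G unfolding TF by blast
  have Tnn: "t \<in> T \<Longrightarrow> nonneg t" for t using G unfolding TF by blast
  have fle: "t \<in> T \<Longrightarrow> p \<in> P \<Longrightarrow> ?f t \<le> cc t \<bullet> p" for t p
    using f_le[OF Tnn P_sub] .
  have convF: "convex F" using face_of_imp_convex[OF F] .
  define Str where "Str t = Inl ` {p\<in>P. cc t \<bullet> p \<noteq> ?f t} \<union> Inr ` {i. t $ i \<noteq> 0}" for t
  define U :: "(real^'a + 't) set" where "U = Inl ` P \<union> Inr ` UNIV"
  have finU: "finite U" using finite_P by (simp add: U_def)
  have StrU: "Str t \<subseteq> U" for t by (auto simp: Str_def U_def)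
  have mid: "(1/2) *\<^sub>R (t1 + t2) \<in> T \<and> Str t1 \<union> Str t2 \<subseteq> Str ((1/2) *\<^sub>R (t1 + t2))"
    if t1: "t1 \<in> T" and t2: "t2 \<in> T" for t1 t2
  proof -
    define m where "m = (1/2) *\<^sub>R (t1 + t2)"
    have "(1 - 1/2) *\<^sub>R (t1, - ?f t1) + (1/2) *\<^sub>R (t2, - ?f t2) \<in> F"
      using convexD[OF convF, of "(t1, - ?f t1)" "(t2, - ?f t2)" "1 - 1/2" "1/2"] t1 t2 TF' by auto
    then have mF: "(m, - (?f t1 + ?f t2) / 2) \<in> F"
      by (simp add: m_def scaleR_right_distrib diff_divide_distrib)
    then have mT: "m \<in> T" and fm: "?f m = (?f t1 + ?f t2) / 2"
      using G[OF mF] TF by auto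
    have "Str t1 \<union> Str t2 \<subseteq> Str m"
    proof
      fix k assume k: "k \<in> Str t1 \<union> Str t2"
      show "k \<in> Str m"
      proof (cases k)
        case (Inl p)
        then have pP: "p \<in> P" and ne: "cc t1 \<bullet> p \<noteq> ?f t1 \<or> cc t2 \<bullet> p \<noteq> ?f t2"
          using k by (auto simp: Str_def)
        have "cc m \<bullet> p = (1/2) * (cc t1 \<bullet> p) + (1/2) * (cc t2 \<bullet> p)"
          unfolding m_def scaleR_right_distrib by (rule cc_comb) simp
        then have "cc m \<bullet> p \<noteq> ?f m" using fle[OF t1 pP] fle[OF t2 pP] ne fm by auto
        then show ?thesis using Inl pP by (auto simp: Str_def)
      next
        case (Inr i)
        then have ne: "t1 $ i \<noteq> 0 \<or> t2 $ i \<noteq> 0" using k by (auto simp: Str_def)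
        have "0 \<le> t1 $ i" "0 \<le> t2 $ i" using Tnn[OF t1] Tnn[OF t2] by (auto simp: nonneg_def)
        then have "m $ i \<noteq> 0" using ne by (auto simp: m_def)
        then show ?thesis using Inr by (auto simp: Str_def)
      qed
    qed
    then show ?thesis using mT by (simp add: m_def)
  qed
  have Tne: "T \<noteq> {}" using Fne TF by auto
  define C where "C = (\<lambda>t. card (Str t)) ` T"
  have finC: "finite C"
    by (rule finite_subset[of _ "{..card U}"]) (auto simp: C_def intro: card_mono[OF finU StrU])
  have "Max C \<in> C" using Max_in[OF finC] Tne by (simp add: C_def)
  then have "\<exists>t\<in>T. card (Str t) = Max C"
    unfolding C_def by (auto simp: image_iff eq_commute)
  then obtain t0 where t0: "t0 \<in> T" "card (Str t0) = Max C" by blast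
  have t0max: "Str t1 \<subseteq> Str t0" if t1: "t1 \<in> T" for t1
  proof (rule ccontr)
    assume "\<not> Str t1 \<subseteq> Str t0"
    then have "Str t0 \<subset> Str ((1/2) *\<^sub>R (t0 + t1))" using mid[OF t0(1) t1] by blast
    then have "card (Str t0) < card (Str ((1/2) *\<^sub>R (t0 + t1)))"
      by (rule psubset_card_mono[OF finite_subset[OF StrU finU]])
    moreover have "card (Str ((1/2) *\<^sub>R (t0 + t1))) \<le> Max C"
      using mid[OF t0(1) t1] finC by (auto simp: C_def)
    ultimately show False using t0(2) by simp
  qed
  have R1: "cc t \<bullet> p = ?f t" if "p \<in> P" "cc t0 \<bullet> p = ?f t0" "t \<in> T" for p t
    using t0max[OF that(3)] that by (auto simp: Str_def)
  have R2: "t $ i = 0" if "t0 $ i = 0" "t \<in> T" for i t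
    using t0max[OF that(2)] that by (auto simp: Str_def)
  obtain p0 where p0: "p0 \<in> P" "?f t0 = cc t0 \<bullet> p0" using fval_min[OF Tnn[OF t0(1)]] by blast
  have p0T: "cc t \<bullet> p0 = ?f t" if "t \<in> T" for t using R1[OF p0(1) p0(2)[symmetric] that] .
  define w0 where "w0 = restr e p0"
  have w0W: "w0 \<in> Wt src tgt c e orig dest t" if "t \<in> T" for t
    unfolding w0_def by (rule Wmem[OF p0(1) Tnn[OF that] p0T[OF that, symmetric]]) auto
  show ?thesis
  proof
    show "T \<subseteq> (\<Inter>w\<in>(\<Inter>t\<in>T. Wt src tgt c e orig dest t). Tw src tgt c e orig dest w)"
    proof
      fix t assume t: "t \<in> T"
      show "t \<in> (\<Inter>w\<in>(\<Inter>t\<in>T. Wt src tgt c e orig dest t). Tw src tgt c e orig dest w)"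
      proof
        fix w assume "w \<in> (\<Inter>t\<in>T. Wt src tgt c e orig dest t)"
        then have "w \<in> Wt src tgt c e orig dest t" using t by blast
        then show "t \<in> Tw src tgt c e orig dest w" by (rule T_sub_TW[OF Tnn[OF t]])
      qed
    qed
  next
    show "(\<Inter>w\<in>(\<Inter>t\<in>T. Wt src tgt c e orig dest t). Tw src tgt c e orig dest w) \<subseteq> T"
    proof
      fix ts assume ts: "ts \<in> (\<Inter>w\<in>(\<Inter>t\<in>T. Wt src tgt c e orig dest t). Tw src tgt c e orig dest w)"
      let ?b = "bvec orig dest"
      have key: "\<exists>ys. lpT_feas src tgt c e ts ys \<and> ?f t0 - w \<bullet> t0 \<le> ?b \<bullet> ys - w \<bullet> ts"
        if w: "w \<in> (\<Inter>t\<in>T. Wt src tgt c e orig dest t)" for w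
      proof -
        have "ts \<in> Tw src tgt c e orig dest w" using ts w by blast
        then obtain ys where ys: "lpT_feas src tgt c e ts ys"
          "\<forall>t' y'. lpT_feas src tgt c e t' y' \<longrightarrow> ?b \<bullet> y' - w \<bullet> t' \<le> ?b \<bullet> ys - w \<bullet> ts"
          by (auto simp: Tw_def)
        obtain y0 where y0: "lpT_feas src tgt c e t0 y0" "?b \<bullet> y0 = ?f t0"
          using fval_min[OF Tnn[OF t0(1)]] by blast
        show ?thesis using ys y0 by metis
      qed
      have w0I: "w0 \<in> (\<Inter>t\<in>T. Wt src tgt c e orig dest t)" using w0W by blast
      have tsnn: "nonneg ts" using key[OF w0I] by (auto simp: lpT_feas_def)
      have fts_ge: "?b \<bullet> ys \<le> ?f ts" if "lpT_feas src tgt c e ts ys" for ys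
      proof -
        obtain pm where "pm \<in> P" "?f ts = cc ts \<bullet> pm" using fval_min[OF tsnn] by blast
        then show ?thesis using WD[OF that P_sub] by simp
      qed
      have S1: "cc ts \<bullet> p = ?f ts" if pP: "p \<in> P" and pt0: "cc t0 \<bullet> p = ?f t0" for p
      proof -
        define w where "w = restr e p"
        have "w \<in> Wt src tgt c e orig dest t" if "t \<in> T" for t
          unfolding w_def by (rule Wmem[OF pP Tnn[OF that] R1[OF pP pt0 that, symmetric]]) auto
        then obtain ys where ys: "lpT_feas src tgt c e ts ys" "?f t0 - w \<bullet> t0 \<le> ?b \<bullet> ys - w \<bullet> ts"
          using key by blast
        have "?f t0 = c \<bullet> p + t0 \<bullet> w" using pt0 by (simp add: cc_inner w_def)
        moreover have "?b \<bullet> ys \<le> ?f ts" by (rule fts_ge[OF ys(1)])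
        moreover have "?f ts \<le> c \<bullet> p + ts \<bullet> w"
          using f_le[OF tsnn P_sub[OF pP]] by (simp add: cc_inner w_def)
        ultimately have "?f ts = c \<bullet> p + ts \<bullet> w" using ys(2) by (simp add: inner_commute)
        then show ?thesis by (simp add: cc_inner w_def)
      qed
      have S2: "ts $ i = 0" if it0: "t0 $ i = 0" for i
      proof -
        define w where "w = w0 + uv i"
        have "w \<in> Wt src tgt c e orig dest t" if tT: "t \<in> T" for t
        proof (rule Wmem[OF p0(1) Tnn[OF tT] p0T[OF tT, symmetric]])
          show "\<forall>j. restr e p0 $ j \<le> w $ j" by (simp add: w_def w0_def uv_def)
          show "t \<bullet> w = t \<bullet> restr e p0"
            using R2[OF it0 tT] by (simp add: w_def w0_def inner_add_right inner_uv)
        qed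
        then obtain ys where ys: "lpT_feas src tgt c e ts ys" "?f t0 - w \<bullet> t0 \<le> ?b \<bullet> ys - w \<bullet> ts"
          using key by blast
        have "w \<bullet> t0 = t0 \<bullet> w0" using it0 unfolding inner_commute[of w t0] unfolding w_def inner_add_right inner_uv by simp
        moreover have "w \<bullet> ts = ts \<bullet> w0 + ts $ i" unfolding inner_commute[of w ts] unfolding w_def inner_add_right inner_uv by simp
        moreover have "?f t0 = c \<bullet> p0 + t0 \<bullet> w0" using p0 by (simp add: cc_inner w0_def)
        moreover have "?b \<bullet> ys \<le> c \<bullet> p0 + ts \<bullet> w0"
          using WD[OF ys(1) P_sub[OF p0(1)]] by (simp add: cc_inner w0_def)
        ultimately have "ts $ i \<le> 0" using ys(2) by linarith
        moreover have "0 \<le> ts $ i" using tsnn by (simp add: nonneg_def)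
        ultimately show ?thesis by simp
      qed
      have fts: "?f ts = cc ts \<bullet> p0" using S1[OF p0(1) p0(2)[symmetric]] by simp
      show "ts \<in> T"
      proof (cases "ts = t0")
        case True then show ?thesis using t0 by simp
      next
        case False
        have t0nn: "nonneg t0" using Tnn[OF t0(1)] .
        obtain e1 where e1: "0 < e1" "\<forall>\<delta>. 0 < \<delta> \<and> \<delta> \<le> e1 \<longrightarrow>
            (\<forall>i\<in>{i. t0 $ i \<noteq> 0}. \<delta> * (ts $ i - t0 $ i) \<le> t0 $ i)"
        proof -
          have "\<forall>i\<in>{i. t0 $ i \<noteq> 0}. 0 < t0 $ i"
            using t0nn unfolding nonneg_def by (auto simp: less_le)
          from eps_exists[OF _ this, of "\<lambda>i. ts $ i - t0 $ i"] show ?thesis using that by auto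
        qed
        obtain e2 where e2: "0 < e2" "\<forall>\<delta>. 0 < \<delta> \<and> \<delta> \<le> e2 \<longrightarrow>
            (\<forall>p\<in>{p\<in>P. cc t0 \<bullet> p \<noteq> ?f t0}. \<delta> * ((cc ts \<bullet> p - ?f ts) - (cc t0 \<bullet> p - ?f t0)) \<le> cc t0 \<bullet> p - ?f t0)"
        proof -
          have "\<forall>p\<in>{p\<in>P. cc t0 \<bullet> p \<noteq> ?f t0}. 0 < cc t0 \<bullet> p - ?f t0"
          proof
            fix p assume "p \<in> {p\<in>P. cc t0 \<bullet> p \<noteq> ?f t0}"
            then have "p \<in> P" "cc t0 \<bullet> p \<noteq> ?f t0" by auto
            then show "0 < cc t0 \<bullet> p - ?f t0" using fle[OF t0(1)] by (simp add: less_le)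
          qed
          moreover have "finite {p\<in>P. cc t0 \<bullet> p \<noteq> ?f t0}" using finite_P by simp
          ultimately show ?thesis
            using eps_exists[of _ "\<lambda>p. cc t0 \<bullet> p - ?f t0" "\<lambda>p. (cc ts \<bullet> p - ?f ts) - (cc t0 \<bullet> p - ?f t0)"] that
            by blast
        qed
        define \<epsilon> where "\<epsilon> = min e1 e2"
        have ep: "0 < \<epsilon>" "\<epsilon> \<le> e1" "\<epsilon> \<le> e2" using e1 e2 by (auto simp: \<epsilon>_def)
        define q where "q = (1 + \<epsilon>) *\<^sub>R t0 + (- \<epsilon>) *\<^sub>R ts"
        have qi: "q $ i = (1 + \<epsilon>) * t0 $ i - \<epsilon> * ts $ i" for i by (simp add: q_def)
        have qnn: "nonneg q"
          unfolding nonneg_def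
        proof
          fix i
          show "0 \<le> q $ i"
          proof (cases "t0 $ i = 0")
            case True then show ?thesis using S2[OF True] by (simp add: qi)
          next
            case False
            then have "\<epsilon> * (ts $ i - t0 $ i) \<le> t0 $ i" using e1(2) ep by auto
            then show ?thesis by (simp add: qi algebra_simps)
          qed
        qed
        have ccq: "cc q \<bullet> p = (1 + \<epsilon>) * (cc t0 \<bullet> p) + (- \<epsilon>) * (cc ts \<bullet> p)" for p
          unfolding q_def by (rule cc_comb) simp
        have qopt: "cc q \<bullet> p0 \<le> cc q \<bullet> p" if pP: "p \<in> P" for p
        proof (cases "cc t0 \<bullet> p = ?f t0")
          case True
          then have "cc ts \<bullet> p = ?f ts" using S1[OF pP] by simp
          then show ?thesis using True p0(2) fts by (simp add: ccq)
        next
          case False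
          then have "\<epsilon> * ((cc ts \<bullet> p - ?f ts) - (cc t0 \<bullet> p - ?f t0)) \<le> cc t0 \<bullet> p - ?f t0"
            using e2(2) ep pP by auto
          then show ?thesis using p0(2) fts by (simp add: ccq algebra_simps)
        qed
        have fq: "?f q = cc q \<bullet> p0"
        proof -
          obtain pq where pq: "pq \<in> P" "?f q = cc q \<bullet> pq"
            "\<forall>x\<in>Xset src tgt orig dest. cc q \<bullet> pq \<le> cc q \<bullet> x"
            using fval_min[OF qnn] by blast
          then show ?thesis using qopt[OF pq(1)] P_sub[OF p0(1)] by force
        qed
        define A where "A = (ts, - ?f ts)"
        define B where "B = (q, - ?f q)"
        have AE: "A \<in> epi_negf src tgt c e orig dest" using tsnn by (simp add: A_def epi_negf_def)
        have BE: "B \<in> epi_negf src tgt c e orig dest" using qnn by (simp add: B_def epi_negf_def)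
        define u where "u = 1 / (1 + \<epsilon>)"
        have u: "0 < u" "u < 1" using ep by (auto simp: u_def)
        have u1: "u * (1 + \<epsilon>) = 1" using ep by (simp add: u_def)
        have comb_t: "(1 - u) *\<^sub>R ts + u *\<^sub>R q = t0"
        proof (rule vec_eq_iff[THEN iffD2], intro allI)
          fix i
          have "(1 - u) * ts $ i + u * ((1 + \<epsilon>) * t0 $ i - \<epsilon> * ts $ i)
              = ts $ i - (u * (1 + \<epsilon>)) * ts $ i + (u * (1 + \<epsilon>)) * t0 $ i"
            by (simp add: algebra_simps)
          also have "\<dots> = t0 $ i" using u1 by simp
          finally show "((1 - u) *\<^sub>R ts + u *\<^sub>R q) $ i = t0 $ i" by (simp add: qi)
        qed
        have "(1 - u) * (cc ts \<bullet> p0) + u * (cc q \<bullet> p0) = cc ((1 - u) *\<^sub>R ts + u *\<^sub>R q) \<bullet> p0"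
          by (rule cc_comb[symmetric]) simp
        then have comb_z: "(1 - u) * (- ?f ts) + u * (- ?f q) = - ?f t0"
          using comb_t fts fq p0(2) by (simp add: algebra_simps)
        have AB: "A \<noteq> B"
        proof
          assume "A = B"
          then have "ts = q" by (simp add: A_def B_def)
          have "ts $ i = t0 $ i" for i
          proof -
            have "ts $ i = q $ i" using \<open>ts = q\<close> by (rule arg_cong)
            also have "\<dots> = (1 + \<epsilon>) * t0 $ i - \<epsilon> * ts $ i" by (rule qi)
            finally have "ts $ i = (1 + \<epsilon>) * t0 $ i - \<epsilon> * ts $ i" .
            moreover have "(1 + \<epsilon>) * ts $ i = ts $ i + \<epsilon> * ts $ i" by (simp add: ring_distribs)
            ultimately have "(1 + \<epsilon>) * ts $ i = (1 + \<epsilon>) * t0 $ i" by linarith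
            then show ?thesis using ep(1) by simp
          qed
          then show False using False by (simp add: vec_eq_iff)
        qed
        have "(1 - u) *\<^sub>R A + u *\<^sub>R B = ((1 - u) *\<^sub>R ts + u *\<^sub>R q, (1 - u) * (- ?f ts) + u * (- ?f q))"
          by (simp add: A_def B_def)
        also have "\<dots> = (t0, - ?f t0)" by (simp only: comb_t comb_z)
        finally have "(t0, - ?f t0) = (1 - u) *\<^sub>R A + u *\<^sub>R B" by (rule sym)
        then have "(t0, - ?f t0) \<in> open_segment A B"
          unfolding in_segment using AB u by (intro conjI exI[of _ u]) auto
        moreover have "(t0, - ?f t0) \<in> F" using TF' t0(1) by blast
        ultimately have "A \<in> F" using F AE BE unfolding face_of_def by blast
        then show ?thesis using TF by (auto simp: A_def)
      qed
    qed
  qed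
qed

end


theorem proposition3:
  fixes src tgt :: "'a::finite \<Rightarrow> 'v::finite"
    and c :: "real^'a"
    and e :: "'t::finite \<Rightarrow> 'a"
    and orig dest :: 'v
    and T :: "(real^'t) set"
  assumes "inj e"
    and "range e \<noteq> UNIV"
    and "\<forall>a. 0 \<le> c $ a"
    and "orig \<noteq> dest"
    and "walk_in src tgt (- range e) orig dest"
    and "action_set src tgt c e orig dest T"
  shows "(\<Inter>w\<in>(\<Inter>t\<in>T. Wt src tgt c e orig dest t). Tw src tgt c e orig dest w) = T"
proof -
  from assms(5) obtain as where as: "as \<noteq> []" "src (hd as) = orig" "tgt (last as) = dest"
    "\<forall>k. Suc k < length as \<longrightarrow> tgt (as ! k) = src (as ! Suc k)"
    unfolding walk_in_def by blast
  then have "wk src tgt as orig dest" using wk_of_walk_in[of as tgt src] by metis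
  then interpret N: net src tgt c e orig dest
    by unfold_locales (use assms in auto)
  from assms(6) obtain F where F: "F face_of epi_negf src tgt c e orig dest" "F \<noteq> {}"
    "((0::real^'t), (1::real)) \<notin> {u - v | u v. u \<in> affine hull F \<and> v \<in> affine hull F}"
    "T = {t. \<exists>z. (t, z) \<in> F}"
    unfolding action_set_def by blast
  show ?thesis by (rule N.main[OF F])
qed

end
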